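(* Let $(\mathcal{X},\mathcal{B},\lambda)$ be a measure space with $\lambda$ positive and $\sigma$-finite, and $P$ a probability measure on it with density $f\in\mathcal{L}^2(\mathcal{X},\lambda)$ with respect to $\lambda$. Let $X_1,\dots,X_N$ be i.i.d. with law $P$. Let $f_1,\dots,f_m\in\mathcal{L}^2$ with $D_k=\int f_k^2d\lambda>0$, and assume condition $\mathcal{H}(p)$ (see context) holds for some $p\in[1,+\infty]$. Then for every $\varepsilon>0$, $$P^{\otimes N}\left\{\forall k\in\{1,\dots,m\},\ f\in\mathcal{CR}_{k,\varepsilon}\right\}\ge 1-\varepsilon.$$
   Context: $d^2(g,h)=\int(g-h)^2d\lambda$ on $\mathcal{L}^2=\mathcal{L}^2(\mathcal{X},\lambda)$. $\hat\alpha_k=\frac{\frac1N\sum_{i=1}^Nf_k(X_i)}{D_k}$. $\mathcal{M}_k=\{\alpha f_k:\alpha\in\mathbb{R}\}$ and $\Pi_{\mathcal{M}_k}$ is the orthogonal projection onto $\mathcal{M}_k$ in $\mathcal{L}^2$. Condition $\mathcal{H}(p)$: for $1<p<\infty$ with $\frac1p+\frac1q=1$, there are known constants $c,c_1,\dots,c_m>0$ with $(\int|f_k|^{2p}d\lambda)^{1/p}\le c_k\int f_k^2d\lambda$ for all $k$ and $(\int|f|^qd\lambda)^{1/q}\le c$; for $p=1$: $f\le c$ everywhere and $c_k=1$; for $p=\infty$: $|f_k|\le\sqrt{c_kD_k}$ everywhere and $c=1$. $C_k=c_kc$. Define $$\beta(\varepsilon,k)=\frac{4\left[1+\log\frac{2m}{\varepsilon}\right]}{N}\left[\frac{\frac1N\sum_{i=1}^Nf_k(X_i)^2}{D_k}+C_k\right],\qquad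 \mathcal{CR}_{k,\varepsilon}=\left\{g\in\mathcal{L}^2: d^2(\hat\alpha_kf_k,\Pi_{\mathcal{M}_k}g)\le\beta(\varepsilon,k)\right\}.$$ *)

theory Defs
  imports "HOL-Probability.Probability"
begin

definition L2 :: "'a measure \<Rightarrow> ('a \<Rightarrow> real) set" where
  "L2 M = {g. g \<in> borel_measurable M \<and> integrable M (\<lambda>x. (g x)\<^sup>2)}"

definition dist2 :: "'a measure \<Rightarrow> ('a \<Rightarrow> real) \<Rightarrow> ('a \<Rightarrow> real) \<Rightarrow> real" where
  "dist2 M g h = (\<integral>x. (g x - h x)\<^sup>2 \<partial>M)"

definition Dnorm :: "'a measure \<Rightarrow> ('a \<Rightarrow> real) \<Rightarrow> real" where
  "Dnorm M fk = (\<integral>x. (fk x)\<^sup>2 \<partial>M)"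

definition span1 :: "('a \<Rightarrow> real) \<Rightarrow> ('a \<Rightarrow> real) set" where
  "span1 fk = {(\<lambda>x. \<alpha> * fk x) | \<alpha>. True}"

definition orth_proj :: "'a measure \<Rightarrow> ('a \<Rightarrow> real) set \<Rightarrow> ('a \<Rightarrow> real) \<Rightarrow> ('a \<Rightarrow> real)" where
  "orth_proj M S g = (THE h. h \<in> S \<and> (\<forall>u\<in>S. (\<integral>x. (g x - h x) * u x \<partial>M) = 0))"

definition alpha_hat :: "'a measure \<Rightarrow> nat \<Rightarrow> ('a \<Rightarrow> real) \<Rightarrow> (nat \<Rightarrow> 'a) \<Rightarrow> real" where
  "alpha_hat M N fk \<omega> = ((1 / real N) * (\<Sum>i\<in>{1..N}. fk (\<omega> i))) / Dnorm M fk"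

text \<open>beta(eps,k), with C_k = c_k * c.\<close>
definition beta :: "'a measure \<Rightarrow> nat \<Rightarrow> nat \<Rightarrow> ('a \<Rightarrow> real) \<Rightarrow> real \<Rightarrow> real \<Rightarrow> real
    \<Rightarrow> (nat \<Rightarrow> 'a) \<Rightarrow> real" where
  "beta M N m fk ck c \<epsilon> \<omega> =
     4 * (1 + ln (2 * real m / \<epsilon>)) / real N *
     (((1 / real N) * (\<Sum>i\<in>{1..N}. (fk (\<omega> i))\<^sup>2)) / Dnorm M fk + ck * c)"

definition CR :: "'a measure \<Rightarrow> nat \<Rightarrow> nat \<Rightarrow> ('a \<Rightarrow> real) \<Rightarrow> real \<Rightarrow> real \<Rightarrow> real
    \<Rightarrow> (nat \<Rightarrow> 'a) \<Rightarrow> ('a \<Rightarrow> real) set" where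
  "CR M N m fk ck c \<epsilon> \<omega> =
     {g \<in> L2 M. dist2 M (\<lambda>x. alpha_hat M N fk \<omega> * fk x) (orth_proj M (span1 fk) g)
                 \<le> beta M N m fk ck c \<epsilon> \<omega>}"

definition cond_H :: "'a measure \<Rightarrow> ('a \<Rightarrow> real) \<Rightarrow> nat \<Rightarrow> (nat \<Rightarrow> 'a \<Rightarrow> real) \<Rightarrow> ereal
    \<Rightarrow> real \<Rightarrow> (nat \<Rightarrow> real) \<Rightarrow> bool" where
  "cond_H M f m fs p c cs \<longleftrightarrow>
     1 \<le> p \<and> c > 0 \<and> (\<forall>k\<in>{1..m}. cs k > 0) \<and>
     (if p = 1 then (\<forall>x\<in>space M. f x \<le> c) \<and> (\<forall>k\<in>{1..m}. cs k = 1)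
      else if p = \<infinity> then
        (\<forall>k\<in>{1..m}. \<forall>x\<in>space M. \<bar>fs k x\<bar> \<le> sqrt (cs k * Dnorm M (fs k))) \<and> c = 1
      else (let p' = real_of_ereal p; q = p' / (p' - 1) in
        (\<forall>k\<in>{1..m}. integrable M (\<lambda>x. \<bar>fs k x\<bar> powr (2 * p')) \<and>
           (\<integral>x. \<bar>fs k x\<bar> powr (2 * p') \<partial>M) powr (1 / p') \<le> cs k * Dnorm M (fs k)) \<and>
        integrable M (\<lambda>x. \<bar>f x\<bar> powr q) \<and>
        (\<integral>x. \<bar>f x\<bar> powr q \<partial>M) powr (1 / q) \<le> c))"

end

theory Submission
  imports Defs
begin

lemma exp_quad_bound:
  fixes x :: real
  shows "exp (x - x\<^sup>2 / 2) \<le> 1 + x + x\<^sup>2 / 2"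
proof -
  define g where "g = (\<lambda>y::real. (1 + y + y*y/2) * exp (y*y/2 - y))"
  have D: "DERIV g y :> (1 + y) * exp (y*y/2 - y) + (1 + y + y*y/2) * (exp (y*y/2 - y) * (y - 1))" for y
  proof -
    have d1: "DERIV (\<lambda>y. 1 + y + y*y/2) y :> 1 + y"
    proof -
      have "DERIV (\<lambda>y. 1 + y + y*y/2) y :> 0 + 1 + (1*y + 1*y)/2"
        by (intro derivative_intros DERIV_cdivide DERIV_mult' DERIV_ident)
      then show ?thesis by simp
    qed
    have d2: "DERIV (\<lambda>y. y*y/2 - y) y :> y - 1"
    proof -
      have "DERIV (\<lambda>y. y*y/2 - y) y :> (1*y + 1*y)/2 - 1"
        by (intro derivative_intros DERIV_cdivide DERIV_mult' DERIV_ident)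
      then show ?thesis by simp
    qed
    show ?thesis unfolding g_def
      using DERIV_mult'[OF d1 DERIV_fun_exp[OF d2]] by (simp add: algebra_simps)
  qed
  have E: "(1 + y) * exp (y*y/2 - y) + (1 + y + y*y/2) * (exp (y*y/2 - y) * (y - 1))
      = exp (y*y/2 - y) * (y * (1 + y/2 + y*y/2))" for y :: real
    by (simp add: algebra_simps)
  have pos: "0 < 1 + y/2 + y*y/2" for y :: real
  proof -
    have "0 \<le> (y + 1/2) * (y + 1/2)" by simp
    moreover have "(y + 1/2) * (y + 1/2) = y*y + y + 1/4" by (simp add: algebra_simps)
    ultimately show ?thesis by linarith
  qed
  have g0: "g 0 = 1" by (simp add: g_def)
  have "g x \<ge> 1"
  proof (cases "x \<ge> 0")
    case True
    have "g 0 \<le> g x"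
    proof (rule DERIV_nonneg_imp_increasing_open[OF True])
      fix y :: real assume "0 < y"
      then show "\<exists>d. DERIV g y :> d \<and> 0 \<le> d"
        using D[of y] pos[of y] unfolding E by (intro exI[of _ "exp (y*y/2 - y) * (y * (1 + y/2 + y*y/2))"]) auto
    next
      show "continuous_on {0..x} g" unfolding g_def by (auto intro!: continuous_intros)
    qed
    then show ?thesis using g0 by simp
  next
    case False
    have "g 0 \<le> g x"
    proof (rule DERIV_nonpos_imp_decreasing_open[of x 0])
      show "x \<le> 0" using False by simp
      fix y :: real assume "y < 0"
      then show "\<exists>d. DERIV g y :> d \<and> d \<le> 0"
      proof -
        have "y * (1 + y/2 + y*y/2) \<le> 0"
          using pos[of y] \<open>y < 0\<close> by (intro mult_nonpos_nonneg) auto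
        then have "exp (y*y/2 - y) * (y * (1 + y/2 + y*y/2)) \<le> 0"
          using mult_nonneg_nonpos[of "exp (y*y/2 - y)" "y * (1 + y/2 + y*y/2)"] by simp
        then show ?thesis using D[of y] unfolding E by blast
      qed
    next
      show "continuous_on {x..0} g" unfolding g_def by (auto intro!: continuous_intros)
    qed
    then show ?thesis using g0 by simp
  qed
  then have "1 \<le> (1 + x + x\<^sup>2/2) * exp (x\<^sup>2/2 - x)" by (simp add: g_def power2_eq_square)
  then have "exp (x - x\<^sup>2/2) \<le> (1 + x + x\<^sup>2/2) * exp (x\<^sup>2/2 - x) * exp (x - x\<^sup>2/2)"
    by (simp add: mult_le_cancel_right1)
  also have "\<dots> = 1 + x + x\<^sup>2/2" by (simp add: mult.assoc flip: exp_add)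
  finally show ?thesis .
qed


lemma factor_bound:
  fixes P :: "'a measure" and Y :: "'a \<Rightarrow> real" and v t :: real
  assumes P: "prob_space P" and Ym[measurable]: "Y \<in> borel_measurable P"
    and Y2: "(\<integral>\<^sup>+x. ennreal ((Y x)\<^sup>2) \<partial>P) \<le> ennreal v" and v0: "0 \<le> v"
  shows "(\<integral>\<^sup>+x. ennreal (exp (t * (Y x - (\<integral>y. Y y \<partial>P)) - t\<^sup>2 / 2 * ((Y x)\<^sup>2 + v))) \<partial>P) \<le> 1"
proof -
  interpret P: prob_space P by (rule P)
  define \<mu> where "\<mu> = (\<integral>y. Y y \<partial>P)"
  have int2: "integrable P (\<lambda>x. (Y x)\<^sup>2)"
    unfolding integrable_iff_bounded using Y2 by (auto simp: top_unique intro: le_less_trans)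
  have int1: "integrable P Y"
    by (rule P.square_integrable_imp_integrable[OF Ym int2])
  have EY2: "(\<integral>x. (Y x)\<^sup>2 \<partial>P) \<le> v"
  proof -
    have "ennreal (\<integral>x. (Y x)\<^sup>2 \<partial>P) = (\<integral>\<^sup>+x. ennreal ((Y x)\<^sup>2) \<partial>P)"
      by (rule nn_integral_eq_integral[symmetric]) (use int2 in auto)
    with Y2 have "ennreal (\<integral>x. (Y x)\<^sup>2 \<partial>P) \<le> ennreal v" by simp
    then show ?thesis using v0 by (simp add: ennreal_le_iff)
  qed
  define c0 where "c0 = exp (- t * \<mu> - t\<^sup>2 / 2 * v)"
  have c0pos: "0 < c0" by (simp add: c0_def)
  have pw: "exp (t * (Y x - \<mu>) - t\<^sup>2 / 2 * ((Y x)\<^sup>2 + v)) \<le> (1 + t * Y x + (t * Y x)\<^sup>2 / 2) * c0" for x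
  proof -
    have "exp (t * (Y x - \<mu>) - t\<^sup>2 / 2 * ((Y x)\<^sup>2 + v)) = exp (t * Y x - (t * Y x)\<^sup>2 / 2) * c0"
      by (simp add: c0_def algebra_simps power_mult_distrib flip: exp_add)
    also have "\<dots> \<le> (1 + t * Y x + (t * Y x)\<^sup>2 / 2) * c0"
      using exp_quad_bound[of "t * Y x"] c0pos by (simp add: mult_right_mono)
    finally show ?thesis .
  qed
  have nn: "0 \<le> 1 + z + z\<^sup>2 / 2" for z :: real
  proof -
    have "0 \<le> (z + 1) * (z + 1)" by simp
    then show ?thesis by (simp add: algebra_simps power2_eq_square)
  qed
  have intq: "integrable P (\<lambda>x. (1 + t * Y x + (t * Y x)\<^sup>2 / 2) * c0)"
    using int1 int2 by (auto simp: power_mult_distrib intro!: integrable_mult_left Bochner_Integration.integrable_add)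
  have R: "(\<integral>x. (1 + t * Y x + (t * Y x)\<^sup>2 / 2) * c0 \<partial>P) \<le> 1"
  proof -
    have "(\<integral>x. (1 + t * Y x + (t * Y x)\<^sup>2 / 2) * c0 \<partial>P) = (1 + t * \<mu> + t\<^sup>2 / 2 * (\<integral>x. (Y x)\<^sup>2 \<partial>P)) * c0"
      using int1 int2 by (simp add: \<mu>_def power_mult_distrib algebra_simps P.prob_space)
    also have "\<dots> \<le> (1 + t * \<mu> + t\<^sup>2 / 2 * v) * c0"
      using EY2 c0pos by (intro mult_right_mono add_left_mono mult_left_mono) auto
    also have "\<dots> \<le> exp (t * \<mu> + t\<^sup>2 / 2 * v) * c0"
      using c0pos by (intro mult_right_mono exp_ge_add_one_self_aux) (auto simp: add.assoc)
    also have "\<dots> = 1" by (simp add: c0_def flip: exp_add)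
    finally show ?thesis .
  qed
  have "(\<integral>\<^sup>+x. ennreal (exp (t * (Y x - \<mu>) - t\<^sup>2 / 2 * ((Y x)\<^sup>2 + v))) \<partial>P)
      \<le> (\<integral>\<^sup>+x. ennreal ((1 + t * Y x + (t * Y x)\<^sup>2 / 2) * c0) \<partial>P)"
    by (intro nn_integral_mono ennreal_leI pw)
  also have "\<dots> = ennreal (\<integral>x. (1 + t * Y x + (t * Y x)\<^sup>2 / 2) * c0 \<partial>P)"
    by (rule nn_integral_eq_integral[OF intq]) (use nn c0pos in auto)
  also have "\<dots> \<le> ennreal 1"
    by (rule ennreal_leI[OF R])
  finally show ?thesis by (simp add: \<mu>_def)
qed


lemma prod_ennreal_le_1:
  fixes f :: "'b \<Rightarrow> ennreal"
  assumes "\<And>i. i \<in> A \<Longrightarrow> f i \<le> 1"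
  shows "prod f A \<le> 1"
  using assms
proof (induction A rule: infinite_finite_induct)
  case (insert x F)
  then have "f x * prod f F \<le> 1 * 1" by (intro mult_mono) auto
  then show ?case using insert by simp
qed auto

lemma mgf_bound:
  fixes P :: "'a measure" and Y :: "'a \<Rightarrow> real" and v t :: real and I :: "'i set"
  assumes P: "prob_space P" and Ym[measurable]: "Y \<in> borel_measurable P"
    and Y2: "(\<integral>\<^sup>+x. ennreal ((Y x)\<^sup>2) \<partial>P) \<le> ennreal v" and v0: "0 \<le> v"
    and I: "finite I"
  shows "(\<integral>\<^sup>+\<omega>. ennreal (exp (t * (\<Sum>i\<in>I. Y (\<omega> i) - (\<integral>y. Y y \<partial>P))
            - t\<^sup>2 / 2 * ((\<Sum>i\<in>I. (Y (\<omega> i))\<^sup>2) + real (card I) * v))) \<partial>PiM I (\<lambda>_. P)) \<le> 1"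
proof -
  interpret P: prob_space P by (rule P)
  interpret PS: product_sigma_finite "\<lambda>_. P"
    by (simp add: product_sigma_finite_def P.sigma_finite_measure_axioms)
  define \<mu> where "\<mu> = (\<integral>y. Y y \<partial>P)"
  define h where "h = (\<lambda>y. ennreal (exp (t * (Y y - \<mu>) - t\<^sup>2 / 2 * ((Y y)\<^sup>2 + v))))"
  have eq: "ennreal (exp (t * (\<Sum>i\<in>I. Y (\<omega> i) - \<mu>)
            - t\<^sup>2 / 2 * ((\<Sum>i\<in>I. (Y (\<omega> i))\<^sup>2) + real (card I) * v))) = (\<Prod>i\<in>I. h (\<omega> i))" for \<omega>
  proof -
    have "t * (\<Sum>i\<in>I. Y (\<omega> i) - \<mu>) - t\<^sup>2 / 2 * ((\<Sum>i\<in>I. (Y (\<omega> i))\<^sup>2) + real (card I) * v)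
        = (\<Sum>i\<in>I. t * (Y (\<omega> i) - \<mu>) - t\<^sup>2 / 2 * ((Y (\<omega> i))\<^sup>2 + v))"
      by (simp add: sum_subtractf sum_distrib_left sum.distrib algebra_simps flip: sum_divide_distrib)
    then show ?thesis unfolding h_def
      by (simp add: exp_sum prod_ennreal I)
  qed
  have "(\<integral>\<^sup>+\<omega>. (\<Prod>i\<in>I. h (\<omega> i)) \<partial>PiM I (\<lambda>_. P)) = (\<Prod>i\<in>I. integral\<^sup>N P h)"
    by (rule PS.product_nn_integral_prod[OF I]) (simp add: h_def)
  also have "\<dots> \<le> 1"
    by (rule prod_ennreal_le_1) (unfold h_def \<mu>_def, rule factor_bound[OF P Ym Y2 v0])
  finally show ?thesis unfolding eq \<mu>_def[symmetric] .
qed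


lemma markov_exp:
  fixes M :: "'a measure" and Z :: "'a \<Rightarrow> real"
  assumes Zm[measurable]: "Z \<in> borel_measurable M"
    and B: "(\<integral>\<^sup>+\<omega>. ennreal (exp (Z \<omega>)) \<partial>M) \<le> 1"
  shows "emeasure M {\<omega>\<in>space M. x \<le> Z \<omega>} \<le> ennreal (exp (-x))"
proof -
  have A: "{\<omega>\<in>space M. x \<le> Z \<omega>} \<in> sets M" by measurable
  have "emeasure M {\<omega>\<in>space M. x \<le> Z \<omega>} = (\<integral>\<^sup>+\<omega>. indicator {\<omega>\<in>space M. x \<le> Z \<omega>} \<omega> \<partial>M)"
    using A by simp
  also have "\<dots> \<le> (\<integral>\<^sup>+\<omega>. ennreal (exp (-x)) * ennreal (exp (Z \<omega>)) \<partial>M)"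
  proof (intro nn_integral_mono)
    fix \<omega> assume "\<omega> \<in> space M"
    show "indicator {\<omega>\<in>space M. x \<le> Z \<omega>} \<omega> \<le> ennreal (exp (-x)) * ennreal (exp (Z \<omega>))"
    proof (cases "x \<le> Z \<omega>")
      case True
      then have "1 \<le> exp (-x) * exp (Z \<omega>)" by (simp flip: exp_add)
      then have "ennreal 1 \<le> ennreal (exp (-x) * exp (Z \<omega>))" by (rule ennreal_leI)
      then have c: "1 \<le> ennreal (exp (-x)) * ennreal (exp (Z \<omega>))" by (simp add: ennreal_mult)
      have "indicator {\<omega>\<in>space M. x \<le> Z \<omega>} \<omega> = (1::ennreal)"
        using True \<open>\<omega> \<in> space M\<close> by (simp add: indicator_def)
      then show ?thesis using c by simp
    qed auto
  qed
  also have "\<dots> = ennreal (exp (-x)) * (\<integral>\<^sup>+\<omega>. ennreal (exp (Z \<omega>)) \<partial>M)"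
    by (rule nn_integral_cmult) measurable
  also have "\<dots> \<le> ennreal (exp (-x)) * 1"
    by (intro mult_left_mono B) auto
  finally show ?thesis by simp
qed

lemma component_nn_integral:
  fixes P :: "'a measure" and h :: "'a \<Rightarrow> ennreal" and I :: "'i set"
  assumes P: "prob_space P" and hm[measurable]: "h \<in> borel_measurable P"
    and I: "finite I" and i: "i \<in> I"
  shows "(\<integral>\<^sup>+\<omega>. h (\<omega> i) \<partial>PiM I (\<lambda>_. P)) = (\<integral>\<^sup>+y. h y \<partial>P)"
proof -
  interpret P: prob_space P by (rule P)
  interpret PS: product_sigma_finite "\<lambda>_. P"
    by (simp add: product_sigma_finite_def P.sigma_finite_measure_axioms)
  define f where "f = (\<lambda>j y. if j = i then h y else 1)"
  have "(\<integral>\<^sup>+\<omega>. (\<Prod>j\<in>I. f j (\<omega> j)) \<partial>PiM I (\<lambda>_. P)) = (\<Prod>j\<in>I. integral\<^sup>N P (f j))"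
    by (rule PS.product_nn_integral_prod[OF I]) (simp add: f_def)
  also have "(\<Prod>j\<in>I. integral\<^sup>N P (f j)) = (\<Prod>j\<in>I. if j = i then integral\<^sup>N P h else 1)"
    by (intro prod.cong) (auto simp: f_def P.emeasure_space_1)
  also have "\<dots> = integral\<^sup>N P h" using I i by (simp add: prod.delta)
  finally show ?thesis using I i by (simp add: f_def prod.delta)
qed

lemma tail_bound:
  fixes P :: "'a measure" and Y :: "'a \<Rightarrow> real" and v a :: real and I :: "'i set"
  assumes P: "prob_space P" and Ym[measurable]: "Y \<in> borel_measurable P"
    and Y2: "(\<integral>\<^sup>+x. ennreal ((Y x)\<^sup>2) \<partial>P) \<le> ennreal v" and v0: "0 \<le> v"
    and I: "finite I" and a: "0 < a"
  shows "emeasure (PiM I (\<lambda>_. P)) {\<omega>\<in>space (PiM I (\<lambda>_. P)). a \<le> (\<Sum>i\<in>I. (Y (\<omega> i))\<^sup>2)}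
          \<le> ennreal (real (card I) * v / a)"
proof -
  let ?O = "PiM I (\<lambda>_. P)"
  have A: "{\<omega>\<in>space ?O. a \<le> (\<Sum>i\<in>I. (Y (\<omega> i))\<^sup>2)} \<in> sets ?O" by measurable
  have "emeasure ?O {\<omega>\<in>space ?O. a \<le> (\<Sum>i\<in>I. (Y (\<omega> i))\<^sup>2)}
      = (\<integral>\<^sup>+\<omega>. indicator {\<omega>\<in>space ?O. a \<le> (\<Sum>i\<in>I. (Y (\<omega> i))\<^sup>2)} \<omega> \<partial>?O)"
    using A by simp
  also have "\<dots> \<le> (\<integral>\<^sup>+\<omega>. ennreal (1/a) * (\<Sum>i\<in>I. ennreal ((Y (\<omega> i))\<^sup>2)) \<partial>?O)"
  proof (intro nn_integral_mono)
    fix \<omega> assume "\<omega> \<in> space ?O"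
    show "indicator {\<omega>\<in>space ?O. a \<le> (\<Sum>i\<in>I. (Y (\<omega> i))\<^sup>2)} \<omega> \<le> ennreal (1/a) * (\<Sum>i\<in>I. ennreal ((Y (\<omega> i))\<^sup>2))"
    proof (cases "a \<le> (\<Sum>i\<in>I. (Y (\<omega> i))\<^sup>2)")
      case True
      then have "1 \<le> 1/a * (\<Sum>i\<in>I. (Y (\<omega> i))\<^sup>2)" using a by (simp add: field_simps)
      then have "ennreal 1 \<le> ennreal (1/a * (\<Sum>i\<in>I. (Y (\<omega> i))\<^sup>2))" by (rule ennreal_leI)
      moreover have "ennreal (1/a * (\<Sum>i\<in>I. (Y (\<omega> i))\<^sup>2)) = ennreal (1/a) * (\<Sum>i\<in>I. ennreal ((Y (\<omega> i))\<^sup>2))"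
        using a by (subst ennreal_mult) (auto simp: sum_ennreal sum_nonneg)
      ultimately have c: "1 \<le> ennreal (1/a) * (\<Sum>i\<in>I. ennreal ((Y (\<omega> i))\<^sup>2))" by (metis ennreal_1)
      have "indicator {\<omega>\<in>space ?O. a \<le> (\<Sum>i\<in>I. (Y (\<omega> i))\<^sup>2)} \<omega> = (1::ennreal)"
        using True \<open>\<omega> \<in> space ?O\<close> by (simp add: indicator_def)
      then show ?thesis using c by simp
    qed auto
  qed
  also have "\<dots> = ennreal (1/a) * (\<integral>\<^sup>+\<omega>. (\<Sum>i\<in>I. ennreal ((Y (\<omega> i))\<^sup>2)) \<partial>?O)"
    by (rule nn_integral_cmult) measurable
  also have "(\<integral>\<^sup>+\<omega>. (\<Sum>i\<in>I. ennreal ((Y (\<omega> i))\<^sup>2)) \<partial>?O) = (\<Sum>i\<in>I. \<integral>\<^sup>+\<omega>. ennreal ((Y (\<omega> i))\<^sup>2) \<partial>?O)"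
    by (rule nn_integral_sum) measurable
  also have "\<dots> = (\<Sum>i\<in>I. \<integral>\<^sup>+y. ennreal ((Y y)\<^sup>2) \<partial>P)"
    by (intro sum.cong refl component_nn_integral[OF P _ I]) measurable
  also have "\<dots> \<le> (\<Sum>i\<in>I. ennreal v)"
    by (intro sum_mono Y2)
  also have "\<dots> = ennreal (real (card I) * v)"
    using v0 by (simp add: sum_ennreal ennreal_of_nat_eq_real_of_nat ennreal_mult')
  also have "ennreal (1/a) * ennreal (real (card I) * v) = ennreal (real (card I) * v / a)"
    using a v0 by (simp add: ennreal_mult'[symmetric])
  finally show ?thesis by (simp add: mult_left_mono)
qed


lemma num_bound:
  fixes L :: real and J :: nat
  assumes L: "0 \<le> L" and J: "J = nat \<lceil>L\<rceil> + 1"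
  shows "1 / (4 ^ J - 1) + 2 * real J * exp (- (16 * (1 + L) / 9)) \<le> 2 * exp (- L)"
proof -
  define k where "k = nat \<lceil>L\<rceil>"
  have kL: "L \<le> real k" "real k < L + 1" using L by (auto simp: k_def) linarith+
  have "exp L \<le> exp (real k)" using kL by simp
  also have "exp (real k) = exp 1 ^ k" by (simp flip: exp_of_nat_mult)
  also have "\<dots> \<le> 4 ^ k" by (intro power_mono) (use exp_le in auto)
  finally have e4: "exp L \<le> 4 ^ k" .
  have "(4::real) ^ J - 1 = 4 * 4 ^ k - 1" by (simp add: J k_def)
  also have "\<dots> \<ge> 4 ^ k" using one_le_power[of "4::real" k] by linarith
  finally have "exp L \<le> 4 ^ J - 1" using e4 by linarith
  then have a: "1 / (4 ^ J - 1) \<le> exp (- L)"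
    by (simp add: exp_minus field_simps) (smt (verit) exp_gt_zero divide_le_eq_1 mult_le_cancel_left1)
  have "exp (4/9::real) \<ge> 1 + 4/9" by (rule exp_ge_add_one_self)
  then have "exp (4/9::real) ^ 4 \<ge> (13/9) ^ 4" by (intro power_mono) auto
  moreover have "exp (4/9::real) ^ 4 = exp (16/9)" by (simp flip: exp_of_nat_mult)
  moreover have "(13/9::real) ^ 4 = 28561/6561" by (simp add: power_numeral_reduce)
  ultimately have e169: "exp (16/9::real) \<ge> 4" by simp
  have e7: "exp (7 * L / 9) \<ge> 1 + 7 * L / 9" by (rule exp_ge_add_one_self)
  have "2 * real J \<le> 2 * (L + 2)" using kL J k_def by simp
  also have "\<dots> \<le> 4 * (1 + 7 * L / 9)" using L by simp
  also have "\<dots> \<le> exp (16/9) * exp (7 * L / 9)"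
    using e169 e7 L by (intro mult_mono) auto
  finally have j: "2 * real J \<le> exp (16/9) * exp (7 * L / 9)" .
  have "exp (- (16 * (1 + L) / 9)) * (exp (16/9) * exp (7 * L / 9)) = exp (- L)"
    by (simp flip: exp_add) (simp add: field_simps)
  then have b: "2 * real J * exp (- (16 * (1 + L) / 9)) \<le> exp (- L)"
    using j by (metis exp_gt_zero less_imp_le mult.commute mult_left_mono)
  show ?thesis using a b by simp
qed

lemma level_ineq:
  fixes K a W s :: real
  assumes K: "0 < K" and a: "0 < a" and aW: "a \<le> W" and W4: "W \<le> 4 * a"
    and s: "0 \<le> s" and KW: "K * W \<le> s\<^sup>2"
  shows "4 * K / 9 \<le> (2/3 * sqrt (K / a)) * s - (2/3 * sqrt (K / a))\<^sup>2 / 2 * W"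
proof -
  define u where "u = sqrt (K / a)"
  define \<sigma> where "\<sigma> = sqrt (W / a)"
  have u0: "0 < u" using K a by (simp add: u_def)
  have uK: "u\<^sup>2 * a = K" using K a by (simp add: u_def)
  have \<sigma>W: "\<sigma>\<^sup>2 * a = W" using a aW by (simp add: \<sigma>_def)
  have \<sigma>1: "1 \<le> \<sigma>" using a aW by (simp add: \<sigma>_def)
  have \<sigma>2: "\<sigma> \<le> 2"
  proof -
    have "\<sigma> \<le> sqrt 4" unfolding \<sigma>_def using a W4 by (intro real_sqrt_le_mono) (simp add: field_simps)
    then show ?thesis by simp
  qed
  have "(u * \<sigma> * a)\<^sup>2 = K * W" using uK \<sigma>W by (simp add: power_mult_distrib algebra_simps power2_eq_square)
  then have "(u * \<sigma> * a)\<^sup>2 \<le> s\<^sup>2" using KW by simp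
  then have ss: "u * \<sigma> * a \<le> s" using s by (rule power2_le_imp_le)
  have q: "0 \<le> (\<sigma> - 1) * (2 - \<sigma>)" using \<sigma>1 \<sigma>2 by (intro mult_nonneg_nonneg) auto
  have "4 * K / 9 \<le> u\<^sup>2 * a * (2/3 * \<sigma> - 2/9 * \<sigma>\<^sup>2)"
  proof -
    have "4/9 \<le> 2/3 * \<sigma> - 2/9 * \<sigma>\<^sup>2" using q by (simp add: algebra_simps power2_eq_square)
    then have "u\<^sup>2 * a * (4/9) \<le> u\<^sup>2 * a * (2/3 * \<sigma> - 2/9 * \<sigma>\<^sup>2)"
      using a by (intro mult_left_mono) auto
    then show ?thesis using uK by simp
  qed
  also have "\<dots> = 2/3 * u * (u * \<sigma> * a) - (2/3 * u)\<^sup>2 / 2 * W"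
    using \<sigma>W by (simp add: algebra_simps power2_eq_square)
  also have "\<dots> \<le> 2/3 * u * s - (2/3 * u)\<^sup>2 / 2 * W"
  proof -
    have "2/3 * u * (u * \<sigma> * a) \<le> 2/3 * u * s" using ss u0 by (intro mult_left_mono) auto
    then show ?thesis by linarith
  qed
  finally show ?thesis by (simp add: u_def)
qed

lemma level_exists:
  fixes w0 W :: real
  assumes w0: "0 < w0" and W: "w0 \<le> W" and WJ: "W < 4 ^ J * w0"
  shows "\<exists>j<J. 4 ^ j * w0 \<le> W \<and> W \<le> 4 ^ Suc j * w0"
  using WJ
proof (induction J)
  case 0
  then show ?case using W by simp
next
  case (Suc J)
  show ?case
  proof (cases "W < 4 ^ J * w0")
    case True
    then show ?thesis using Suc.IH by (meson less_SucI)
  next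
    case False
    then show ?thesis using Suc.prems by (intro exI[of _ J]) auto
  qed
qed

lemma core_bound:
  fixes P :: "'a measure" and Y :: "'a \<Rightarrow> real" and v L :: real and I :: "'i set"
  assumes P: "prob_space P" and Ym[measurable]: "Y \<in> borel_measurable P"
    and Y2: "(\<integral>\<^sup>+x. ennreal ((Y x)\<^sup>2) \<partial>P) \<le> ennreal v" and v0: "0 < v"
    and I: "finite I" "I \<noteq> {}" and L: "0 \<le> L"
  shows "measure (PiM I (\<lambda>_. P))
     {\<omega>\<in>space (PiM I (\<lambda>_. P)). 4 * (1 + L) * ((\<Sum>i\<in>I. (Y (\<omega> i))\<^sup>2) + real (card I) * v)
         < (\<Sum>i\<in>I. Y (\<omega> i) - (\<integral>y. Y y \<partial>P))\<^sup>2} \<le> 2 * exp (- L)"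
proof -
  let ?O = "PiM I (\<lambda>_. P)"
  interpret O: prob_space ?O by (rule prob_space_PiM) (use P in auto)
  define \<mu> where "\<mu> = (\<integral>y. Y y \<partial>P)"
  define K where "K = 4 * (1 + L)"
  define w0 where "w0 = real (card I) * v"
  define S where "S = (\<lambda>\<omega>. \<Sum>i\<in>I. Y (\<omega> i) - \<mu>)"
  define Q where "Q = (\<lambda>\<omega>. \<Sum>i\<in>I. (Y (\<omega> i))\<^sup>2)"
  define J where "J = nat \<lceil>L\<rceil> + 1"
  define t where "t = (\<lambda>j::nat. 2/3 * sqrt (K / (4 ^ j * w0)))"
  define x where "x = 16 * (1 + L) / 9"
  have [measurable]: "S \<in> borel_measurable ?O" "Q \<in> borel_measurable ?O"
    unfolding S_def Q_def by measurable
  have K0: "0 < K" using L by (simp add: K_def)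
  have w00: "0 < w0" using I v0 by (simp add: w0_def card_gt_0_iff)
  define Up where "Up = (\<lambda>j. {\<omega>\<in>space ?O. x \<le> t j * S \<omega> - (t j)\<^sup>2 / 2 * (Q \<omega> + w0)})"
  define Dn where "Dn = (\<lambda>j. {\<omega>\<in>space ?O. x \<le> (- t j) * S \<omega> - (- t j)\<^sup>2 / 2 * (Q \<omega> + w0)})"
  define T where "T = {\<omega>\<in>space ?O. (4 ^ J - 1) * w0 \<le> Q \<omega>}"
  have [measurable]: "Up j \<in> sets ?O" "Dn j \<in> sets ?O" for j
    unfolding Up_def Dn_def by measurable
  have Tm[measurable]: "T \<in> sets ?O" unfolding T_def by measurable
  have mgf: "(\<integral>\<^sup>+\<omega>. ennreal (exp (s * S \<omega> - s\<^sup>2 / 2 * (Q \<omega> + w0))) \<partial>?O) \<le> 1" for s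
    using mgf_bound[OF P Ym Y2 _ I(1), of s] v0 unfolding S_def Q_def w0_def \<mu>_def by simp
  have mUp: "measure ?O (Up j) \<le> exp (- x)" for j
  proof -
    have "emeasure ?O (Up j) \<le> ennreal (exp (- x))"
      unfolding Up_def by (rule markov_exp[OF _ mgf]) measurable
    then show ?thesis by (simp add: O.emeasure_eq_measure ennreal_le_iff)
  qed
  have mDn: "measure ?O (Dn j) \<le> exp (- x)" for j
  proof -
    have "emeasure ?O (Dn j) \<le> ennreal (exp (- x))"
      unfolding Dn_def by (rule markov_exp[OF _ mgf]) measurable
    then show ?thesis by (simp add: O.emeasure_eq_measure ennreal_le_iff)
  qed
  have J1: "1 \<le> J" by (simp add: J_def)
  have "(4::real) ^ 1 \<le> 4 ^ J" using J1 by (intro power_increasing) auto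
  then have J4: "0 < (4::real) ^ J - 1" by simp
  have mT: "measure ?O T \<le> 1 / (4 ^ J - 1)"
  proof -
    have "emeasure ?O T \<le> ennreal (real (card I) * v / ((4 ^ J - 1) * w0))"
      unfolding T_def Q_def
      by (rule tail_bound[OF P Ym Y2 _ I(1)]) (use v0 J4 w00 in auto)
    also have "real (card I) * v / ((4 ^ J - 1) * w0) = 1 / (4 ^ J - 1)"
      using w00 J4 v0 I by (simp add: w0_def card_gt_0_iff)
    finally show ?thesis using J4 by (simp add: O.emeasure_eq_measure ennreal_le_iff)
  qed
  have sub: "{\<omega>\<in>space ?O. K * (Q \<omega> + w0) < (S \<omega>)\<^sup>2} \<subseteq> T \<union> (\<Union>j\<in>{..<J}. Up j \<union> Dn j)"
  proof
    fix \<omega> assume "\<omega> \<in> {\<omega>\<in>space ?O. K * (Q \<omega> + w0) < (S \<omega>)\<^sup>2}"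
    then have \<omega>: "\<omega> \<in> space ?O" and lt: "K * (Q \<omega> + w0) < (S \<omega>)\<^sup>2" by auto
    have Q0: "0 \<le> Q \<omega>" unfolding Q_def by (simp add: sum_nonneg)
    show "\<omega> \<in> T \<union> (\<Union>j\<in>{..<J}. Up j \<union> Dn j)"
    proof (cases "4 ^ J * w0 \<le> Q \<omega> + w0")
      case True
      then show ?thesis using \<omega> by (simp add: T_def algebra_simps)
    next
      case False
      then obtain j where j: "j < J" "4 ^ j * w0 \<le> Q \<omega> + w0" "Q \<omega> + w0 \<le> 4 ^ Suc j * w0"
        using level_exists[OF w00, of "Q \<omega> + w0" J] Q0 by auto
      have a0: "0 < 4 ^ j * w0" using w00 by simp
      have lev: "4 * K / 9 \<le> t j * \<bar>S \<omega>\<bar> - (t j)\<^sup>2 / 2 * (Q \<omega> + w0)"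
        unfolding t_def
        by (rule level_ineq[OF K0 a0 j(2)]) (use j(3) lt in auto)
      have x4: "x = 4 * K / 9" by (simp add: x_def K_def)
      show ?thesis
      proof (cases "0 \<le> S \<omega>")
        case True
        then have "\<omega> \<in> Up j" using lev \<omega> by (simp add: Up_def x4)
        then show ?thesis using j by auto
      next
        case False
        then have "\<omega> \<in> Dn j" using lev \<omega> by (simp add: Dn_def x4)
        then show ?thesis using j by auto
      qed
    qed
  qed
  have "measure ?O {\<omega>\<in>space ?O. K * (Q \<omega> + w0) < (S \<omega>)\<^sup>2}
      \<le> measure ?O (T \<union> (\<Union>j\<in>{..<J}. Up j \<union> Dn j))"
    by (rule O.finite_measure_mono[OF sub]) measurable
  also have "\<dots> \<le> measure ?O T + measure ?O (\<Union>j\<in>{..<J}. Up j \<union> Dn j)"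
    by (rule measure_Un_le) measurable
  also have "measure ?O (\<Union>j\<in>{..<J}. Up j \<union> Dn j) \<le> (\<Sum>j\<in>{..<J}. measure ?O (Up j \<union> Dn j))"
    by (rule O.finite_measure_subadditive_finite) auto
  also have "\<dots> \<le> (\<Sum>j\<in>{..<J}. 2 * exp (- x))"
  proof (rule sum_mono)
    fix j
    have "measure ?O (Up j \<union> Dn j) \<le> measure ?O (Up j) + measure ?O (Dn j)"
      by (rule measure_Un_le) measurable
    then show "measure ?O (Up j \<union> Dn j) \<le> 2 * exp (- x)" using mUp[of j] mDn[of j] by linarith
  qed
  also have "(\<Sum>j\<in>{..<J}. 2 * exp (- x)) = 2 * real J * exp (- x)" by simp
  finally have "measure ?O {\<omega>\<in>space ?O. K * (Q \<omega> + w0) < (S \<omega>)\<^sup>2} \<le> 1 / (4 ^ J - 1) + 2 * real J * exp (- x)"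
    using mT by linarith
  also have "\<dots> \<le> 2 * exp (- L)"
    unfolding x_def by (rule num_bound[OF L J_def])
  finally show ?thesis unfolding K_def Q_def w0_def S_def \<mu>_def .
qed

lemma L2_mult_integrable:
  assumes g: "g \<in> L2 M" and h: "h \<in> L2 M"
  shows "integrable M (\<lambda>x. h x * g x)"
proof -
  have [measurable]: "g \<in> borel_measurable M" "h \<in> borel_measurable M" using g h by (auto simp: L2_def)
  have "integrable M (\<lambda>x. (h x)\<^sup>2 + (g x)\<^sup>2)" using g h by (auto simp: L2_def)
  then show ?thesis
  proof (rule Bochner_Integration.integrable_bound)
    show "(\<lambda>x. h x * g x) \<in> borel_measurable M" by measurable
    show "AE x in M. norm (h x * g x) \<le> norm ((h x)\<^sup>2 + (g x)\<^sup>2)"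
    proof (intro AE_I2)
      fix x
      have "0 \<le> (\<bar>h x\<bar> - \<bar>g x\<bar>)\<^sup>2" by simp
      then have "2 * \<bar>h x\<bar> * \<bar>g x\<bar> \<le> (h x)\<^sup>2 + (g x)\<^sup>2"
        by (simp add: power2_eq_square algebra_simps)
      moreover have "0 \<le> \<bar>h x\<bar> * \<bar>g x\<bar>" by simp
      ultimately have "\<bar>h x\<bar> * \<bar>g x\<bar> \<le> (h x)\<^sup>2 + (g x)\<^sup>2" by linarith
      then show "norm (h x * g x) \<le> norm ((h x)\<^sup>2 + (g x)\<^sup>2)"
        by (simp add: abs_mult)
    qed
  qed
qed

lemma orth_proj_span1:
  assumes g: "g \<in> L2 M" and h: "h \<in> L2 M" and D: "Dnorm M g > 0"
  shows "orth_proj M (span1 g) h = (\<lambda>x. ((\<integral>y. h y * g y \<partial>M) / Dnorm M g) * g x)"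
proof -
  define \<alpha> where "\<alpha> = (\<integral>y. h y * g y \<partial>M) / Dnorm M g"
  have ihg: "integrable M (\<lambda>x. h x * g x)" by (rule L2_mult_integrable[OF g h])
  have igg: "integrable M (\<lambda>x. (g x)\<^sup>2)" using g by (simp add: L2_def)
  have orth: "(\<integral>x. (h x - a * g x) * (b * g x) \<partial>M) = b * ((\<integral>x. h x * g x \<partial>M) - a * Dnorm M g)" for a b
  proof -
    have "(\<lambda>x. (h x - a * g x) * (b * g x)) = (\<lambda>x. b * (h x * g x) - (a * b) * (g x)\<^sup>2)"
      by (auto simp: algebra_simps power2_eq_square)
    then show ?thesis using ihg igg by (simp add: Dnorm_def algebra_simps)
  qed
  show ?thesis
    unfolding orth_proj_def \<alpha>_def[symmetric]
  proof (rule the_equality)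
    show "(\<lambda>x. \<alpha> * g x) \<in> span1 g \<and> (\<forall>u\<in>span1 g. (\<integral>x. (h x - \<alpha> * g x) * u x \<partial>M) = 0)"
    proof
      show "(\<lambda>x. \<alpha> * g x) \<in> span1 g" by (auto simp: span1_def)
      have aD: "\<alpha> * Dnorm M g = (\<integral>x. h x * g x \<partial>M)" using D by (simp add: \<alpha>_def)
      show "\<forall>u\<in>span1 g. (\<integral>x. (h x - \<alpha> * g x) * u x \<partial>M) = 0"
      proof
        fix u assume "u \<in> span1 g"
        then obtain b where b: "u = (\<lambda>x. b * g x)" by (auto simp: span1_def)
        show "(\<integral>x. (h x - \<alpha> * g x) * u x \<partial>M) = 0" unfolding b orth aD by simp
      qed
    qed
  next
    fix k assume k: "k \<in> span1 g \<and> (\<forall>u\<in>span1 g. (\<integral>x. (h x - k x) * u x \<partial>M) = 0)"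
    then obtain a where a: "k = (\<lambda>x. a * g x)" by (auto simp: span1_def)
    have "g \<in> span1 g" unfolding span1_def by (auto intro!: exI[of _ 1])
    then have "(\<integral>x. (h x - a * g x) * (1 * g x) \<partial>M) = 0" using k a by auto
    then have "a = \<alpha>" using D by (simp only: orth) (simp add: \<alpha>_def field_simps)
    then show "k = (\<lambda>x. \<alpha> * g x)" using a by simp
  qed
qed


lemma nn_le_integral:
  fixes G F :: "'a \<Rightarrow> real"
  assumes Fi: "integrable M F" and GF: "\<And>x. x \<in> space M \<Longrightarrow> 0 \<le> G x \<and> G x \<le> F x"
    and B: "(\<integral>x. F x \<partial>M) \<le> B"
  shows "(\<integral>\<^sup>+x. ennreal (G x) \<partial>M) \<le> ennreal B"
proof -
  have "(\<integral>\<^sup>+x. ennreal (G x) \<partial>M) \<le> (\<integral>\<^sup>+x. ennreal (F x) \<partial>M)"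
    by (intro nn_integral_mono ennreal_leI) (use GF in auto)
  also have "\<dots> = ennreal (\<integral>x. F x \<partial>M)"
    by (rule nn_integral_eq_integral[OF Fi]) (use GF in \<open>auto intro: order_trans\<close>)
  also have "\<dots> \<le> ennreal B" using B by (rule ennreal_leI)
  finally show ?thesis .
qed

lemma powr_le_from_root:
  fixes I A p :: real
  assumes "0 \<le> I" "0 < p" "I powr (1 / p) \<le> A"
  shows "I \<le> A powr p"
proof -
  have "I = (I powr (1 / p)) powr p" using assms by (simp add: powr_powr)
  also have "\<dots> \<le> A powr p" using assms by (intro powr_mono2) auto
  finally show ?thesis .
qed

lemma second_moment:
  fixes M :: "'a measure" and f :: "'a \<Rightarrow> real" and fs :: "nat \<Rightarrow> 'a \<Rightarrow> real"
  assumes fm[measurable]: "f \<in> borel_measurable M" and f0: "\<And>x. x \<in> space M \<Longrightarrow> f x \<ge> 0"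
    and Pprob: "prob_space (density M (\<lambda>x. ennreal (f x)))"
    and H: "cond_H M f m fs p c cs" and k: "k \<in> {1..m}"
    and gL2: "fs k \<in> L2 M" and D: "Dnorm M (fs k) > 0"
  shows "(\<integral>\<^sup>+x. ennreal ((fs k x)\<^sup>2) \<partial>density M (\<lambda>x. ennreal (f x))) \<le> ennreal (cs k * c * Dnorm M (fs k))"
proof -
  define g where "g = fs k"
  define Dk where "Dk = Dnorm M g"
  have gm[measurable]: "g \<in> borel_measurable M" using gL2 by (simp add: L2_def g_def)
  have gi: "integrable M (\<lambda>x. (g x)\<^sup>2)" using gL2 by (simp add: L2_def g_def)
  have Dk: "Dk = (\<integral>x. (g x)\<^sup>2 \<partial>M)" by (simp add: Dk_def Dnorm_def)
  have Dk0: "0 < Dk" using D by (simp add: Dk_def g_def)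
  have c0: "0 < c" and ck0: "0 < cs k" using H k by (auto simp: cond_H_def)
  have eq: "(\<integral>\<^sup>+x. ennreal ((g x)\<^sup>2) \<partial>density M (\<lambda>x. ennreal (f x))) = (\<integral>\<^sup>+x. ennreal (f x * (g x)\<^sup>2) \<partial>M)"
    by (subst nn_integral_density) (auto intro!: nn_integral_cong simp: ennreal_mult f0)
  have nonneg: "\<And>x. x \<in> space M \<Longrightarrow> 0 \<le> f x * (g x)\<^sup>2" using f0 by simp
  have "(\<integral>\<^sup>+x. ennreal (f x * (g x)\<^sup>2) \<partial>M) \<le> ennreal (cs k * c * Dk)"
  proof (cases "p = 1")
    case True
    then have fc: "\<And>x. x \<in> space M \<Longrightarrow> f x \<le> c" and ck1: "cs k = 1"
      using H k by (auto simp: cond_H_def)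
    show ?thesis
    proof (rule nn_le_integral[where F = "\<lambda>x. c * (g x)\<^sup>2"])
      show "integrable M (\<lambda>x. c * (g x)\<^sup>2)" using gi by simp
      show "0 \<le> f x * (g x)\<^sup>2 \<and> f x * (g x)\<^sup>2 \<le> c * (g x)\<^sup>2" if "x \<in> space M" for x
        using nonneg[OF that] fc[OF that] by (simp add: mult_right_mono)
      show "(\<integral>x. c * (g x)\<^sup>2 \<partial>M) \<le> cs k * c * Dk" by (simp add: Dk ck1)
    qed
  next
    case p1: False
    show ?thesis
    proof (cases "p = \<infinity>")
      case True
      then have gb: "\<And>x. x \<in> space M \<Longrightarrow> \<bar>g x\<bar> \<le> sqrt (cs k * Dk)" and c1: "c = 1"
        using H k p1 by (auto simp: cond_H_def g_def Dk_def)
      interpret PD: prob_space "density M (\<lambda>x. ennreal (f x))" by (rule Pprob)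
      have "(\<integral>\<^sup>+x. ennreal (f x) \<partial>M) = emeasure (density M (\<lambda>x. ennreal (f x))) (space M)"
        by (subst emeasure_density) (auto intro!: nn_integral_cong)
      also have "\<dots> = 1" using PD.emeasure_space_1 by simp
      finally have nf: "(\<integral>\<^sup>+x. ennreal (f x) \<partial>M) = ennreal 1" by simp
      have fi: "integrable M f"
        by (rule integrableI_nn_integral_finite[OF fm _ nf]) (use f0 in auto)
      have intf: "(\<integral>x. f x \<partial>M) = 1"
        using nn_integral_eq_integral[OF fi] nf f0 by (simp add: AE_I2)
      show ?thesis
      proof (rule nn_le_integral[where F = "\<lambda>x. f x * (cs k * Dk)"])
        show "integrable M (\<lambda>x. f x * (cs k * Dk))" using fi by simp
        show "0 \<le> f x * (g x)\<^sup>2 \<and> f x * (g x)\<^sup>2 \<le> f x * (cs k * Dk)" if "x \<in> space M" for x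
        proof -
          have "(g x)\<^sup>2 = \<bar>g x\<bar>\<^sup>2" by simp
          also have "\<dots> \<le> (sqrt (cs k * Dk))\<^sup>2" using gb[OF that] by (intro power_mono) auto
          also have "\<dots> = cs k * Dk" using ck0 Dk0 by simp
          finally show ?thesis using nonneg[OF that] f0[OF that] by (simp add: mult_left_mono)
        qed
        show "(\<integral>x. f x * (cs k * Dk) \<partial>M) \<le> cs k * c * Dk" using intf c1 by simp
      qed
    next
      case pinf: False
      have p1': "1 \<le> p" using H by (simp add: cond_H_def)
      obtain p' where pp: "p = ereal p'" and p'1: "1 < p'"
        using p1 pinf p1' by (cases p) auto
      define q where "q = p' / (p' - 1)"
      have q1: "1 < q" using p'1 by (simp add: q_def field_simps)
      have pq: "1 / p' + 1 / q = 1" using p'1 by (simp add: q_def field_simps)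
      have Hm: "integrable M (\<lambda>x. \<bar>g x\<bar> powr (2 * p'))"
          "(\<integral>x. \<bar>g x\<bar> powr (2 * p') \<partial>M) powr (1 / p') \<le> cs k * Dk"
          "integrable M (\<lambda>x. \<bar>f x\<bar> powr q)"
          "(\<integral>x. \<bar>f x\<bar> powr q \<partial>M) powr (1 / q) \<le> c"
        using H k p1 pinf unfolding cond_H_def pp q_def g_def Dk_def by (auto simp: Let_def)
      define A where "A = cs k * Dk"
      have A0: "0 < A" using ck0 Dk0 by (simp add: A_def)
      have I1: "(\<integral>x. \<bar>g x\<bar> powr (2 * p') \<partial>M) \<le> A powr p'"
        using Hm(2) p'1 by (intro powr_le_from_root) (auto simp: A_def)
      have I2: "(\<integral>x. \<bar>f x\<bar> powr q \<partial>M) \<le> c powr q"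
        using Hm(4) q1 by (intro powr_le_from_root) auto
      define F where "F = (\<lambda>x. A * c * (\<bar>g x\<bar> powr (2 * p') / (p' * A powr p') + \<bar>f x\<bar> powr q / (q * c powr q)))"
      show ?thesis
      proof (rule nn_le_integral[where F = F])
        show "integrable M F" unfolding F_def using Hm(1,3) by simp
        show "0 \<le> f x * (g x)\<^sup>2 \<and> f x * (g x)\<^sup>2 \<le> F x" if "x \<in> space M" for x
        proof -
          define a where "a = (g x)\<^sup>2 / A"
          define b where "b = f x / c"
          have a0: "0 \<le> a" "0 \<le> b" using A0 c0 f0[OF that] by (auto simp: a_def b_def)
          have Y: "a * b \<le> a powr p' / p' + b powr q / q"
            by (rule Youngs_inequality) (use p'1 q1 pq a0 in auto)
          have ap: "a powr p' = \<bar>g x\<bar> powr (2 * p') / A powr p'"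
          proof -
            have h2: "(g x)\<^sup>2 = \<bar>g x\<bar> powr 2" by simp
            have "(g x)\<^sup>2 powr p' = \<bar>g x\<bar> powr (2 * p')" by (simp only: h2 powr_powr)
            then show ?thesis using A0 by (simp add: a_def powr_divide)
          qed
          have bq: "b powr q = \<bar>f x\<bar> powr q / c powr q"
            using f0[OF that] c0 by (simp add: b_def powr_divide)
          have "f x * (g x)\<^sup>2 = A * c * (a * b)" using A0 c0 by (simp add: a_def b_def)
          also have "\<dots> \<le> A * c * (a powr p' / p' + b powr q / q)"
            using Y A0 c0 by (intro mult_left_mono) auto
          also have "\<dots> = F x" by (simp add: F_def ap bq mult.commute)
          finally show ?thesis using nonneg[OF that] by simp
        qed
        have "(\<integral>x. F x \<partial>M) = A * c * ((\<integral>x. \<bar>g x\<bar> powr (2 * p') \<partial>M) / (p' * A powr p')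
             + (\<integral>x. \<bar>f x\<bar> powr q \<partial>M) / (q * c powr q))"
          unfolding F_def using Hm(1,3) by simp
        also have "\<dots> \<le> A * c * (A powr p' / (p' * A powr p') + c powr q / (q * c powr q))"
          using I1 I2 A0 c0 p'1 q1
          by (intro mult_left_mono add_mono divide_right_mono) auto
        also have "\<dots> = A * c * (1 / p' + 1 / q)" using A0 c0 by simp
        also have "\<dots> = cs k * c * Dk" using pq by (simp add: A_def)
        finally show "(\<integral>x. F x \<partial>M) \<le> cs k * c * Dk" .
      qed
    qed
  qed
  then show ?thesis using eq by (simp add: g_def Dk_def)
qed

lemma alg_equiv:
  fixes n D a b \<mu> K C :: real
  assumes n: "0 < n" and D: "0 < D"
  shows "((((1 / n) * a) / D - \<mu> / D)\<^sup>2 * D \<le> K / n * (((1 / n) * b) / D + C))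
     \<longleftrightarrow> (a - n * \<mu>)\<^sup>2 \<le> K * (b + n * (C * D))"
proof -
  have e1: "(((1 / n) * a) / D - \<mu> / D)\<^sup>2 * D = (a - n * \<mu>)\<^sup>2 / (n\<^sup>2 * D)"
    using n D by (simp add: field_simps power2_eq_square)
  have e2: "K / n * (((1 / n) * b) / D + C) = K * (b + n * (C * D)) / (n\<^sup>2 * D)"
    using n D by (simp add: field_simps power2_eq_square)
  have pos: "0 < n\<^sup>2 * D" using n D by simp
  show ?thesis unfolding e1 e2 using pos by (simp add: divide_le_cancel)
qed

theorem corollary1:
  fixes M :: "'a measure" and f :: "'a \<Rightarrow> real" and fs :: "nat \<Rightarrow> 'a \<Rightarrow> real"
    and m N :: nat and p :: ereal and c :: real and cs :: "nat \<Rightarrow> real" and \<epsilon> :: real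
  assumes "sigma_finite_measure M"
    and "f \<in> borel_measurable M" and "\<And>x. x \<in> space M \<Longrightarrow> f x \<ge> 0"
    and "prob_space (density M (\<lambda>x. ennreal (f x)))"
    and "f \<in> L2 M"
    and "N \<ge> 1"
    and "\<And>k. k \<in> {1..m} \<Longrightarrow> fs k \<in> L2 M"
    and "\<And>k. k \<in> {1..m} \<Longrightarrow> Dnorm M (fs k) > 0"
    and "cond_H M f m fs p c cs"
    and "\<epsilon> > 0"
  shows "measure (PiM {1..N} (\<lambda>_. density M (\<lambda>x. ennreal (f x))))
           {\<omega> \<in> space (PiM {1..N} (\<lambda>_. density M (\<lambda>x. ennreal (f x)))).
              \<forall>k\<in>{1..m}. f \<in> CR M N m (fs k) (cs k) c \<epsilon> \<omega>}
         \<ge> 1 - \<epsilon>"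
proof -
  note fm[measurable] = assms(2)
  note f0 = assms(3)
  note Pprob = assms(4)
  note fL2 = assms(5)
  note gL2 = assms(7)
  note D = assms(8)
  note H = assms(9)
  note eps = assms(10)
  let ?P = "density M (\<lambda>x. ennreal (f x))"
  let ?O = "PiM {1..N} (\<lambda>_. ?P)"
  let ?G = "{\<omega> \<in> space ?O. \<forall>k\<in>{1..m}. f \<in> CR M N m (fs k) (cs k) c \<epsilon> \<omega>}"
  interpret O: prob_space ?O by (rule prob_space_PiM) (use Pprob in auto)
  show ?thesis
  proof (cases "1 \<le> \<epsilon> \<or> m = 0")
    case True
    then show ?thesis
    proof
      assume "1 \<le> \<epsilon>" then show ?thesis using measure_nonneg[of ?O ?G] by linarith
    next
      assume "m = 0"
      then have "?G = space ?O" by auto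
      then show ?thesis using eps O.prob_space by simp
    qed
  next
    case False
    then have eps1: "\<epsilon> < 1" and m1: "1 \<le> m" by auto
    define L where "L = ln (2 * real m / \<epsilon>)"
    have gt1: "1 < 2 * real m / \<epsilon>" using eps eps1 m1 by (simp add: field_simps)
    have L0: "0 \<le> L" unfolding L_def using gt1 by simp
    have expL: "exp (- L) = \<epsilon> / (2 * real m)"
      unfolding L_def using gt1 eps m1 by (simp add: exp_minus exp_ln_iff)
    define \<mu> where "\<mu> = (\<lambda>k. \<integral>y. fs k y \<partial>?P)"
    define v where "v = (\<lambda>k. cs k * c * Dnorm M (fs k))"
    define Bad where "Bad = (\<lambda>k. {\<omega>\<in>space ?O. 4 * (1 + L) * ((\<Sum>i\<in>{1..N}. (fs k (\<omega> i))\<^sup>2) + real (card {1..N}) * v k)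
         < (\<Sum>i\<in>{1..N}. fs k (\<omega> i) - \<mu> k)\<^sup>2})"
    have c0: "0 < c" and ck0: "\<And>k. k \<in> {1..m} \<Longrightarrow> 0 < cs k" using H by (auto simp: cond_H_def)
    have gm: "\<And>k. k \<in> {1..m} \<Longrightarrow> fs k \<in> borel_measurable M" using gL2 by (auto simp: L2_def)
    have Badm: "Bad k \<in> sets ?O" if k: "k \<in> {1..m}" for k
    proof -
      have [measurable]: "fs k \<in> borel_measurable ?P" using gm[OF k] by simp
      show ?thesis unfolding Bad_def by measurable
    qed
    have mBad: "measure ?O (Bad k) \<le> \<epsilon> / real m" if k: "k \<in> {1..m}" for k
    proof -
      have "measure ?O (Bad k) \<le> 2 * exp (- L)"
        unfolding Bad_def \<mu>_def
      proof (rule core_bound[OF Pprob _ _ _ _ _ L0])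
        show "fs k \<in> borel_measurable ?P" using gm[OF k] by simp
        show "(\<integral>\<^sup>+x. ennreal ((fs k x)\<^sup>2) \<partial>?P) \<le> ennreal (v k)"
          unfolding v_def by (rule second_moment[OF fm f0 Pprob H k gL2[OF k] D[OF k]])
        show "0 < v k" using ck0[OF k] c0 D[OF k] by (simp add: v_def)
        show "finite {1..N}" by simp
        show "{1..N} \<noteq> {}" using assms(6) by simp
      qed
      also have "\<dots> = \<epsilon> / real m" using expL m1 by simp
      finally show ?thesis .
    qed
    have equiv: "f \<in> CR M N m (fs k) (cs k) c \<epsilon> \<omega> \<longleftrightarrow> \<omega> \<notin> Bad k"
      if k: "k \<in> {1..m}" and \<omega>: "\<omega> \<in> space ?O" for k \<omega>
    proof -
      define g where "g = fs k"
      define Dk where "Dk = Dnorm M g"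
      have Dk0: "0 < Dk" using D[OF k] by (simp add: Dk_def g_def)
      have gmk[measurable]: "g \<in> borel_measurable M" using gm[OF k] by (simp add: g_def)
      have mu: "\<mu> k = (\<integral>y. f y * g y \<partial>M)"
        unfolding \<mu>_def g_def by (subst integral_density) (use gm[OF k] f0 in \<open>auto intro: AE_I2\<close>)
      have op: "orth_proj M (span1 g) f = (\<lambda>x. (\<mu> k / Dk) * g x)"
        unfolding mu Dk_def by (rule orth_proj_span1[OF gL2[OF k, folded g_def] fL2 D[OF k, folded g_def]])
      have d2: "dist2 M (\<lambda>x. A * g x) (\<lambda>x. B * g x) = (A - B)\<^sup>2 * Dk" for A B
      proof -
        have "(\<lambda>x. (A * g x - B * g x)\<^sup>2) = (\<lambda>x. (A - B)\<^sup>2 * (g x)\<^sup>2)"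
          by (auto simp: algebra_simps power2_eq_square)
        then show ?thesis by (simp add: dist2_def Dk_def Dnorm_def)
      qed
      have sumeq: "(\<Sum>i\<in>{1..N}. fs k (\<omega> i) - \<mu> k) = (\<Sum>i\<in>{1..N}. fs k (\<omega> i)) - real N * \<mu> k"
        by (simp add: sum_subtractf)
      have nN: "0 < real N" using assms(6) by simp
      have "f \<in> CR M N m (fs k) (cs k) c \<epsilon> \<omega> \<longleftrightarrow>
          dist2 M (\<lambda>x. alpha_hat M N g \<omega> * g x) (orth_proj M (span1 g) f) \<le> beta M N m g (cs k) c \<epsilon> \<omega>"
        using fL2 by (simp add: CR_def g_def)
      also have "\<dots> \<longleftrightarrow> (alpha_hat M N g \<omega> - \<mu> k / Dk)\<^sup>2 * Dk \<le> beta M N m g (cs k) c \<epsilon> \<omega>"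
        by (simp only: op d2)
      also have "\<dots> \<longleftrightarrow>
          ((((1 / real N) * (\<Sum>i\<in>{1..N}. g (\<omega> i))) / Dk - \<mu> k / Dk)\<^sup>2 * Dk
            \<le> 4 * (1 + L) / real N * (((1 / real N) * (\<Sum>i\<in>{1..N}. (g (\<omega> i))\<^sup>2)) / Dk + cs k * c))"
        by (simp only: alpha_hat_def beta_def Dk_def L_def)
      also have "\<dots> \<longleftrightarrow> ((\<Sum>i\<in>{1..N}. g (\<omega> i)) - real N * \<mu> k)\<^sup>2
            \<le> 4 * (1 + L) * ((\<Sum>i\<in>{1..N}. (g (\<omega> i))\<^sup>2) + real N * (cs k * c * Dk))"
        by (rule alg_equiv[OF nN Dk0])
      also have "\<dots> \<longleftrightarrow> \<omega> \<notin> Bad k"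
        using \<omega> sumeq by (simp add: Bad_def v_def g_def Dk_def not_less mult.assoc)
      finally show ?thesis .
    qed
    have "?G = space ?O - (\<Union>k\<in>{1..m}. Bad k)"
      using equiv by auto
    moreover have Um: "(\<Union>k\<in>{1..m}. Bad k) \<in> sets ?O"
      using Badm by (intro sets.finite_UN) auto
    have "measure ?O (space ?O - (\<Union>k\<in>{1..m}. Bad k)) = 1 - measure ?O (\<Union>k\<in>{1..m}. Bad k)"
      by (rule O.prob_compl[OF Um])
    ultimately have "measure ?O ?G = 1 - measure ?O (\<Union>k\<in>{1..m}. Bad k)"
      by simp
    moreover have "measure ?O (\<Union>k\<in>{1..m}. Bad k) \<le> (\<Sum>k\<in>{1..m}. measure ?O (Bad k))"
      by (rule measure_UNION_le) (use Badm in auto)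
    moreover have "(\<Sum>k\<in>{1..m}. measure ?O (Bad k)) \<le> (\<Sum>k\<in>{1..m}. \<epsilon> / real m)"
      by (rule sum_mono) (rule mBad)
    moreover have "(\<Sum>k\<in>{1..m}. \<epsilon> / real m) = \<epsilon>" using m1 by simp
    ultimately show ?thesis by linarith
  qed
qed

end
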